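(* Let $S$ be a finite subgroup of $O(n)$. Then there exist an $S$-invariant subset $\Omega_S\subset\mathbb R^n$ which is the complement of a finite union of hyperplanes, and an open subset $U_S\subset\Omega_S$, such that $sU_S\cap U_S=\emptyset$ for all $s\in S\setminus\{I\}$ and $\bigcup_{s\in S}sU_S=\Omega_S$. *)

theory Defs
  imports "HOL-Analysis.Analysis"
begin

definition subgroup_On :: "(real^'n^'n) set \<Rightarrow> bool" where
  "subgroup_On S \<longleftrightarrow>
     (\<forall>s\<in>S. orthogonal_matrix s) \<and> mat 1 \<in> S \<and>
     (\<forall>s\<in>S. \<forall>t\<in>S. s ** t \<in> S) \<and> (\<forall>s\<in>S. matrix_inv s \<in> S)"

definition hyperplane :: "real^'n \<Rightarrow> real \<Rightarrow> (real^'n) set" where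
  "hyperplane a b = {x. a \<bullet> x = b}"

end

theory Submission
  imports Defs
begin

lemma orth_inv:
  fixes s :: "real^'n^'n"
  assumes "orthogonal_matrix s"
  shows "s ** matrix_inv s = mat 1 \<and> matrix_inv s ** s = mat 1"
proof -
  have "\<exists>A'. s ** A' = mat 1 \<and> A' ** s = mat 1"
    using assms unfolding orthogonal_matrix_def by blast
  then show ?thesis unfolding matrix_inv_def by (rule someI_ex)
qed

lemma orth_inner:
  fixes s :: "real^'n^'n"
  assumes "orthogonal_matrix s"
  shows "(s *v a) \<bullet> (s *v b) = a \<bullet> b"
proof -
  have "(s *v a) \<bullet> (s *v b) = ((s *v a) v* s) \<bullet> b" by (simp add: dot_lmul_matrix)
  also have "\<dots> = (transpose s *v (s *v a)) \<bullet> b" by simp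
  also have "\<dots> = a \<bullet> b" using assms
    by (simp add: matrix_vector_mul_assoc orthogonal_matrix_def)
  finally show ?thesis .
qed

lemma orth_inner2:
  fixes s :: "real^'n^'n"
  assumes "orthogonal_matrix s"
  shows "a \<bullet> (s *v b) = (matrix_inv s *v a) \<bullet> b"
proof -
  have "a = s *v (matrix_inv s *v a)"
    using orth_inv[OF assms] by (simp add: matrix_vector_mul_assoc)
  then have "a \<bullet> (s *v b) = (s *v (matrix_inv s *v a)) \<bullet> (s *v b)" by simp
  also have "\<dots> = (matrix_inv s *v a) \<bullet> b" by (rule orth_inner[OF assms])
  finally show ?thesis .
qed

theorem lemmaA1:
  fixes S :: "(real^'n^'n) set"
  assumes "subgroup_On S" and "finite S"
  shows "\<exists>(\<Omega> :: (real^'n) set) (U :: (real^'n) set) (H :: ((real^'n) \<times> real) set).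
           finite H \<and> (\<forall>(a, b)\<in>H. a \<noteq> 0) \<and>
           \<Omega> = UNIV - (\<Union>(a, b)\<in>H. hyperplane a b) \<and>
           (\<forall>s\<in>S. (\<lambda>x. s *v x) ` \<Omega> = \<Omega>) \<and>
           open U \<and> U \<subseteq> \<Omega> \<and>
           (\<forall>s\<in>S - {mat 1}. (\<lambda>x. s *v x) ` U \<inter> U = {}) \<and>
           (\<Union>s\<in>S. (\<lambda>x. s *v x) ` U) = \<Omega>"
proof -
  have orth: "\<And>s. s \<in> S \<Longrightarrow> orthogonal_matrix s"
   and one: "mat 1 \<in> S"
   and mul: "\<And>s t. s \<in> S \<Longrightarrow> t \<in> S \<Longrightarrow> s ** t \<in> S"
   and inv: "\<And>s. s \<in> S \<Longrightarrow> matrix_inv s \<in> S"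
    using assms(1) unfolding subgroup_On_def by auto
  have invl: "\<And>s. s \<in> S \<Longrightarrow> matrix_inv s ** s = mat 1"
   and invr: "\<And>s. s \<in> S \<Longrightarrow> s ** matrix_inv s = mat 1"
    using orth_inv orth by blast+
  \<comment> \<open>a point with trivial stabilizer\<close>
  define row where "row s = (SOME a. a \<noteq> 0 \<and> (\<forall>x. s *v x = x \<longrightarrow> a \<bullet> x = 0))" for s :: "real^'n^'n"
  have row: "row s \<noteq> 0 \<and> (\<forall>x. s *v x = x \<longrightarrow> row s \<bullet> x = 0)" if sne: "s \<noteq> mat 1" for s :: "real^'n^'n"
  proof -
    have ne0: "s - mat 1 \<noteq> 0" using sne by simp
    have "\<exists>i. (s - mat 1) $ i \<noteq> (0::real^'n^'n) $ i"
      using ne0 vec_eq_iff[of "s - mat 1" 0] by blast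
    then obtain i where i: "(s - mat 1) $ i \<noteq> 0" by (auto simp only: zero_index)
    have "(s - mat 1) $ i \<noteq> 0 \<and> (\<forall>x. s *v x = x \<longrightarrow> (s - mat 1) $ i \<bullet> x = 0)"
    proof (intro conjI allI impI i)
      fix x assume "s *v x = x"
      then have "(s - mat 1) *v x = 0"
        by (simp add: matrix_vector_mult_diff_rdistrib)
      then have "((s - mat 1) *v x) $ i = 0" by simp
      then show "(s - mat 1) $ i \<bullet> x = 0"
        by (simp add: matrix_vector_mult_def inner_vec_def mult.commute)
    qed
    then show ?thesis unfolding row_def by (rule someI)
  qed
  have "negligible (\<Union>s\<in>S - {mat 1}. {x. row s \<bullet> x = 0})"
    using assms(2) row by (intro negligible_Union) (auto intro!: negligible_hyperplane)
  then have "UNIV \<noteq> (\<Union>s\<in>S - {mat 1}. {x. row s \<bullet> x = 0})"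
    using non_negligible_UNIV by metis
  then obtain p where "p \<notin> (\<Union>s\<in>S - {mat 1}. {x. row s \<bullet> x = 0})" by blast
  then have p: "\<And>s. s \<in> S - {mat 1} \<Longrightarrow> row s \<bullet> p \<noteq> 0" by blast
  have fixp: "s *v p \<noteq> p" if "s \<in> S" "s \<noteq> mat 1" for s
    using p[of s] row[of s] that by auto
  have injp: "s = t" if "s \<in> S" "t \<in> S" "s *v p = t *v p" for s t
  proof (rule ccontr)
    assume ne: "s \<noteq> t"
    have "matrix_inv t ** s \<in> S" using that inv mul by blast
    moreover have "matrix_inv t ** s \<noteq> mat 1"
    proof
      assume "matrix_inv t ** s = mat 1"
      then have "t ** (matrix_inv t ** s) = t" by simp
      then have "s = t" using invr[OF that(2)] by (simp add: matrix_mul_assoc)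
      then show False using ne by simp
    qed
    moreover have "(matrix_inv t ** s) *v p = p"
    proof -
      have "(matrix_inv t ** s) *v p = matrix_inv t *v (t *v p)"
        using that(3) by (simp add: matrix_vector_mul_assoc[symmetric])
      also have "\<dots> = p" using invl[OF that(2)] by (simp add: matrix_vector_mul_assoc)
      finally show ?thesis .
    qed
    ultimately show False using fixp by blast
  qed
  define H where "H = (\<lambda>(s, t). (s *v p - t *v p, 0::real)) ` {(s, t). s \<in> S \<and> t \<in> S \<and> s \<noteq> t}"
  define \<Omega> where "\<Omega> = UNIV - (\<Union>(a, b)\<in>H. hyperplane a b)"
  have Om: "\<Omega> = {y. \<forall>s\<in>S. \<forall>t\<in>S. s \<noteq> t \<longrightarrow> (s *v p) \<bullet> y \<noteq> (t *v p) \<bullet> y}"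
    unfolding \<Omega>_def H_def hyperplane_def by (auto simp: inner_diff_left)
  have finH: "finite H" unfolding H_def
    by (rule finite_imageI, rule finite_subset[of _ "S \<times> S"]) (use assms(2) in auto)
  have Hne: "\<forall>(a, b)\<in>H. a \<noteq> 0" unfolding H_def using injp by auto
  have sub: "(\<lambda>x. r *v x) ` \<Omega> \<subseteq> \<Omega>" if r: "r \<in> S" for r
  proof
    fix z assume "z \<in> (\<lambda>x. r *v x) ` \<Omega>"
    then obtain y where y: "y \<in> \<Omega>" and z: "z = r *v y" by auto
    show "z \<in> \<Omega>" unfolding Om
    proof (intro CollectI ballI impI)
      fix s t assume st: "s \<in> S" "t \<in> S" "s \<noteq> t"
      have e: "(u *v p) \<bullet> z = ((matrix_inv r ** u) *v p) \<bullet> y" for u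
        using orth_inner2[OF orth[OF r]] z by (simp add: matrix_vector_mul_assoc)
      have "matrix_inv r ** s \<noteq> matrix_inv r ** t"
      proof
        assume "matrix_inv r ** s = matrix_inv r ** t"
        then have "r ** (matrix_inv r ** s) = r ** (matrix_inv r ** t)" by simp
        then show False using invr[OF r] st by (simp add: matrix_mul_assoc)
      qed
      moreover have "matrix_inv r ** s \<in> S" "matrix_inv r ** t \<in> S" using st r inv mul by auto
      ultimately show "(s *v p) \<bullet> z \<noteq> (t *v p) \<bullet> z" unfolding e using y Om by auto
    qed
  qed
  have inv\<Omega>: "(\<lambda>x. r *v x) ` \<Omega> = \<Omega>" if r: "r \<in> S" for r
  proof
    show "(\<lambda>x. r *v x) ` \<Omega> \<subseteq> \<Omega>" using sub r .
    show "\<Omega> \<subseteq> (\<lambda>x. r *v x) ` \<Omega>"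
    proof
      fix y assume y: "y \<in> \<Omega>"
      have "matrix_inv r *v y \<in> \<Omega>" using sub[OF inv[OF r]] y by auto
      moreover have "y = r *v (matrix_inv r *v y)"
        using invr[OF r] by (simp add: matrix_vector_mul_assoc)
      ultimately show "y \<in> (\<lambda>x. r *v x) ` \<Omega>" by blast
    qed
  qed
  define U where "U = \<Omega> \<inter> (\<Inter>s\<in>S - {mat 1}. {y. (s *v p - p) \<bullet> y < 0})"
  have openOm: "open \<Omega>"
    unfolding \<Omega>_def using finH
    by (intro open_Diff open_UNIV closed_UN) (auto simp: hyperplane_def closed_hyperplane)
  have openU: "open U" unfolding U_def
    using assms(2) openOm by (intro open_Int open_INT) (auto intro: open_halfspace_lt)
  have Uchar: "y \<in> U \<longleftrightarrow> y \<in> \<Omega> \<and> (\<forall>s\<in>S - {mat 1}. (s *v p) \<bullet> y < p \<bullet> y)" for y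
    unfolding U_def by (auto simp: inner_diff_left)
  have disj: "(\<lambda>x. r *v x) ` U \<inter> U = {}" if r: "r \<in> S - {mat 1}" for r
  proof (rule ccontr)
    assume "(\<lambda>x. r *v x) ` U \<inter> U \<noteq> {}"
    then obtain y where y: "y \<in> U" and ry: "r *v y \<in> U" by auto
    have rS: "r \<in> S" "r \<noteq> mat 1" using r by auto
    have ri: "matrix_inv r \<noteq> mat 1"
    proof
      assume "matrix_inv r = mat 1"
      then show False using invr[OF rS(1)] rS(2) by simp
    qed
    have 1: "(matrix_inv r *v p) \<bullet> y < p \<bullet> y" using y Uchar inv[OF rS(1)] ri by auto
    have 2: "(r *v p) \<bullet> (r *v y) < p \<bullet> (r *v y)" using ry Uchar rS by auto
    have "(r *v p) \<bullet> (r *v y) = p \<bullet> y" by (rule orth_inner[OF orth[OF rS(1)]])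
    moreover have "p \<bullet> (r *v y) = (matrix_inv r *v p) \<bullet> y" by (rule orth_inner2[OF orth[OF rS(1)]])
    ultimately show False using 1 2 by simp
  qed
  have cover: "(\<Union>s\<in>S. (\<lambda>x. s *v x) ` U) = \<Omega>"
  proof
    show "(\<Union>s\<in>S. (\<lambda>x. s *v x) ` U) \<subseteq> \<Omega>"
      using inv\<Omega> Uchar by blast
    show "\<Omega> \<subseteq> (\<Union>s\<in>S. (\<lambda>x. s *v x) ` U)"
    proof
      fix y assume y: "y \<in> \<Omega>"
      define f where "f s = (s *v p) \<bullet> y" for s
      have "Max (f ` S) \<in> f ` S" using assms(2) one by (intro Max_in) auto
      then obtain s0 where s0: "s0 \<in> S" and s0m: "f s0 = Max (f ` S)" by auto
      have mx: "f s \<le> f s0" if "s \<in> S" for s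
        using s0m assms(2) that by simp
      define x where "x = matrix_inv s0 *v y"
      have yx: "y = s0 *v x" unfolding x_def
        using invr[OF s0] by (simp add: matrix_vector_mul_assoc)
      have xO: "x \<in> \<Omega>" using sub[OF inv[OF s0]] y x_def by auto
      have ex: "(u *v p) \<bullet> x = f (s0 ** u)" for u
        unfolding f_def yx using orth_inner[OF orth[OF s0], of "u *v p" x]
        by (simp add: matrix_vector_mul_assoc)
      have "x \<in> U" unfolding Uchar
      proof (intro conjI ballI xO)
        fix s assume s: "s \<in> S - {mat 1}"
        have ne: "s0 ** s \<noteq> s0"
        proof
          assume "s0 ** s = s0"
          then have "matrix_inv s0 ** (s0 ** s) = matrix_inv s0 ** s0" by simp
          then have "(matrix_inv s0 ** s0) ** s = matrix_inv s0 ** s0" by (simp only: matrix_mul_assoc)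
          then show False using invl[OF s0] s by simp
        qed
        have sS: "s0 ** s \<in> S" using s s0 mul by auto
        have "f (s0 ** s) \<le> f s0" using mx sS .
        moreover have "f (s0 ** s) \<noteq> f s0" using y Om ne sS s0 unfolding f_def by auto
        moreover have "p \<bullet> x = f s0" using ex[of "mat 1"] by simp
        ultimately show "(s *v p) \<bullet> x < p \<bullet> x" using ex[of s] by simp
      qed
      then show "y \<in> (\<Union>s\<in>S. (\<lambda>x. s *v x) ` U)" using yx s0 by blast
    qed
  qed
  have UO: "U \<subseteq> \<Omega>" unfolding U_def by blast
  show ?thesis
    apply (rule exI[of _ \<Omega>], rule exI[of _ U], rule exI[of _ H])
    apply (intro conjI)
           apply (rule finH)
          apply (rule Hne)
         apply (rule \<Omega>_def)
        apply (use inv\<Omega> in blast)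
       apply (rule openU)
      apply (rule UO)
     apply (use disj in blast)
    apply (rule cover)
    done
qed

end
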